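(* Let $\mathbf{F}$ be a Baire foliage tree on a topological space $X$ and let $A\subseteq X$ be at most countable. Then there is a Baire foliage tree $\mathbf{H}$ on the subspace $X\setminus A$ such that for every $p\in X\setminus A$ there is a strictly increasing function $f_p:\omega\to\omega$ with $$\{2n+1: n\in\omega\text{ and }f_p(n)\in\mathrm{rise}_{\mathbf{F}}(p,U)\}\subseteq\mathrm{rise}_{\mathbf{H}}(p,U\setminus A)$$ for all neighbourhoods $U$ of $p$ in $X$.
   Context: Neighbourhoods are not necessarily open. $\omega=\{0,1,2,\dots\}$, ${}^{<\omega}\omega$ is the set of finite sequences of natural numbers. A tree is a strict partial order in which the set of predecessors of every node is well-ordered; $\mathrm{height}(x)$ is the ordinal isomorphic to the set of predecessors of $x$; a branch is a maximal chain; $\mathrm{sons}(x)$ is the set of immediate successors of $x$; $0$ denotes the least node. A foliage tree is a pair $\mathbf{F}=(T,l)$ with $T$ a tree (skeleton) and $l$ a function on its nodes, $\mathbf{F}_x:=l(x)$; tree notions apply via the skeleton. $\mathrm{shoot}_{\mathbf{F}}(v)=\{\bigcup_{x\in C}\mathbf{F}_x: C\text{ a cofinite subset of }\mathrm{sons}_{\mathbf{F}}(v)\}$; $\mathrm{scope}_{\mathbf{F}}(p)=\{x:p\in\mathbf{F}_x\}$. For families $\gamma,\delta$ of sets, $\gamma\gg\delta$ means every nonempty $D\in\delta$ contains some nonempty $G\in\gamma$. $\mathrm{rise}_{\mathbf{F}}(p,U)=\{\mathrm{height}_{\mathbf{F}}(v): v\in\mathrm{scope}_{\mathbf{F}}(p),\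 \mathrm{shoot}_{\mathbf{F}}(v)\gg\{U\}\}$. $\mathbf{F}$ is locally strict if each non-maximal leaf $\mathbf{F}_x$ is the disjoint union of $\mathbf{F}_s$, $s\in\mathrm{sons}(x)$; has strict branches if it has a node and for each branch $B$, $\bigcap_{x\in B}\mathbf{F}_x$ is a singleton; is open in $X$ if all leaves are open in $X$; is a foliage $\omega,\omega$-tree if its skeleton is order-isomorphic to $({}^{<\omega}\omega,\subsetneq)$. A Baire foliage tree on $X$ is an open in $X$, locally strict foliage $\omega,\omega$-tree with strict branches and $\mathbf{F}_{0_{\mathbf{F}}}=X$. *)

theory Defs
  imports "HOL-Analysis.Analysis" "HOL-Library.Sublist"
begin

text \<open>A foliage \<omega>,\<omega>-tree is represented (up to isomorphism of skeletons) by its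
  labelling function on the canonical skeleton: finite sequences of naturals
  ordered by strict prefix. The height of a node s is length s; its sons are s @ [n].\<close>

type_synonym 'a foliage = "nat list \<Rightarrow> 'a set"

definition sons :: "nat list \<Rightarrow> nat list set" where
  "sons s = range (\<lambda>n. s @ [n])"

definition shoot :: "'a foliage \<Rightarrow> nat list \<Rightarrow> 'a set set" where
  "shoot F v = {\<Union>x\<in>C. F x | C. C \<subseteq> sons v \<and> finite (sons v - C)}"

definition scope :: "'a foliage \<Rightarrow> 'a \<Rightarrow> nat list set" where
  "scope F p = {x. p \<in> F x}"

definition gg :: "'a set set \<Rightarrow> 'a set set \<Rightarrow> bool" where
  "gg \<gamma> \<delta> \<longleftrightarrow> (\<forall>D\<in>\<delta>. D \<noteq> {} \<longrightarrow> (\<exists>G\<in>\<gamma>. G \<noteq> {} \<and> G \<subseteq> D))"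

definition rise :: "'a foliage \<Rightarrow> 'a \<Rightarrow> 'a set \<Rightarrow> nat set" where
  "rise F p U = {length v | v. v \<in> scope F p \<and> gg (shoot F v) {U}}"

definition tree_chain :: "nat list set \<Rightarrow> bool" where
  "tree_chain B \<longleftrightarrow> (\<forall>x\<in>B. \<forall>y\<in>B. x = y \<or> strict_prefix x y \<or> strict_prefix y x)"

definition tree_branch :: "nat list set \<Rightarrow> bool" where
  "tree_branch B \<longleftrightarrow> tree_chain B \<and> (\<forall>C. tree_chain C \<and> B \<subseteq> C \<longrightarrow> C = B)"

definition locally_strict :: "'a foliage \<Rightarrow> bool" where
  "locally_strict F \<longleftrightarrow>
     (\<forall>x. F x = (\<Union>s\<in>sons x. F s) \<and> disjoint_family_on F (sons x))"
  \<comment> \<open>every node of the skeleton is non-maximal\<close>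

definition strict_branches :: "'a foliage \<Rightarrow> bool" where
  "strict_branches F \<longleftrightarrow> (\<forall>B. tree_branch B \<longrightarrow> (\<exists>p. (\<Inter>x\<in>B. F x) = {p}))"
  \<comment> \<open>the skeleton trivially has a node\<close>

definition open_foliage :: "'a topology \<Rightarrow> 'a foliage \<Rightarrow> bool" where
  "open_foliage X F \<longleftrightarrow> (\<forall>x. openin X (F x))"

definition baire_foliage_tree :: "'a topology \<Rightarrow> 'a foliage \<Rightarrow> bool" where
  "baire_foliage_tree X F \<longleftrightarrow>
     open_foliage X F \<and> locally_strict F \<and> strict_branches F \<and> F [] = topspace X"

definition nbhd :: "'a topology \<Rightarrow> 'a \<Rightarrow> 'a set \<Rightarrow> bool" where
  "nbhd X p U \<longleftrightarrow> U \<subseteq> topspace X \<and> (\<exists>V. openin X V \<and> p \<in> V \<and> V \<subseteq> U)"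

end

theory Submission
  imports Defs
begin

definition good :: "(nat \<Rightarrow> nat list) \<Rightarrow> bool" where
  "good s \<longleftrightarrow> (\<forall>k. length (s k) = k) \<and> (\<forall>k j. k \<le> j \<longrightarrow> s k = take k (s j))"

lemma prefix_length_eq1: "prefix x y \<Longrightarrow> length x = length y \<Longrightarrow> x = y"
  by (auto simp: prefix_def)

lemma prefix_length_eq: "prefix x y \<or> prefix y x \<Longrightarrow> length x = length y \<Longrightarrow> x = y"
  using prefix_length_eq1 by metis

lemma strict_prefix_len: "strict_prefix x y \<Longrightarrow> length x < length y"
  by (rule prefix_length_less)

lemma good_branch:
  assumes "good s" shows "tree_branch (range s)"
proof -
  have ch: "tree_chain (range s)"
    unfolding tree_chain_def
  proof (intro ballI)
    fix x y assume "x \<in> range s" "y \<in> range s"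
    then obtain i j where xy: "x = s i" "y = s j" by auto
    have "prefix (s i) (s j) \<or> prefix (s j) (s i)"
    proof (cases "i \<le> j")
      case True then have "s i = take i (s j)" using assms good_def by blast
      then show ?thesis by (metis take_is_prefix)
    next
      case False then have "s j = take j (s i)" using assms good_def by simp
      then show ?thesis by (metis take_is_prefix)
    qed
    then show "x = y \<or> strict_prefix x y \<or> strict_prefix y x"
      using xy by (auto simp: strict_prefix_def)
  qed
  moreover have "C = range s" if "tree_chain C" "range s \<subseteq> C" for C
  proof -
    have "c \<in> range s" if "c \<in> C" for c
    proof -
      have "s (length c) \<in> C" using \<open>range s \<subseteq> C\<close> by auto
      with \<open>tree_chain C\<close> \<open>c \<in> C\<close> have
        "c = s (length c) \<or> strict_prefix c (s (length c)) \<or> strict_prefix (s (length c)) c"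
        unfolding tree_chain_def by blast
      moreover have "length (s (length c)) = length c" using assms good_def by blast
      ultimately have "c = s (length c)" using strict_prefix_len by fastforce
      then show ?thesis by auto
    qed
    then show ?thesis using that by auto
  qed
  ultimately show ?thesis unfolding tree_branch_def by blast
qed

lemma branch_good:
  assumes B: "tree_branch B" shows "\<exists>s. good s \<and> B = range s"
proof -
  have ch: "tree_chain B" and mx: "\<And>C. tree_chain C \<Longrightarrow> B \<subseteq> C \<Longrightarrow> C = B"
    using B unfolding tree_branch_def by auto
  have cmp: "prefix x y \<or> prefix y x" if "x \<in> B" "y \<in> B" for x y
    using ch that unfolding tree_chain_def by (auto simp: strict_prefix_def)
  have down: "c \<in> B" if "b \<in> B" "prefix c b" for b c
  proof -
    have "tree_chain (insert c B)"
      unfolding tree_chain_def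
    proof (intro ballI)
      fix x y assume x: "x \<in> insert c B" and y: "y \<in> insert c B"
      have "prefix x y \<or> prefix y x"
      proof -
        have "prefix c z \<or> prefix z c" if "z \<in> B" for z
        proof -
          from cmp[OF that \<open>b \<in> B\<close>] show ?thesis
          proof
            assume "prefix z b" then show ?thesis using \<open>prefix c b\<close> prefix_same_cases by blast
          next
            assume "prefix b z" then show ?thesis using \<open>prefix c b\<close> prefix_order.trans by blast
          qed
        qed
        then show ?thesis using x y cmp by auto
      qed
      then show "x = y \<or> strict_prefix x y \<or> strict_prefix y x"
        by (auto simp: strict_prefix_def)
    qed
    then have "insert c B = B" using mx by blast
    then show ?thesis by auto
  qed
  have uniq: "x = y" if "x \<in> B" "y \<in> B" "length x = length y" for x y
    using cmp[OF that(1,2)] that(3) by (metis prefix_length_eq)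
  have emp: "[] \<in> B"
  proof -
    have "tree_chain (insert [] B)" using ch unfolding tree_chain_def
      by (auto simp: strict_prefix_def)
    then show ?thesis using mx by blast
  qed
  have long: "\<exists>b\<in>B. k \<le> length b" for k
  proof (rule ccontr)
    assume "\<not> ?thesis"
    then have lt: "\<forall>b\<in>B. length b < k" by auto
    let ?L = "length ` B"
    have "?L \<subseteq> {..<k}" using lt by auto
    then have "finite ?L" using finite_subset by blast
    moreover have "?L \<noteq> {}" using emp by auto
    ultimately have "Max ?L \<in> ?L" by simp
    then obtain b where b: "b \<in> B" "length b = Max ?L" by auto
    have "tree_chain (insert (b @ [0]) B)"
      unfolding tree_chain_def
    proof (intro ballI)
      fix x y assume x: "x \<in> insert (b@[0]) B" and y: "y \<in> insert (b@[0]) B"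
      have pz: "prefix z (b @ [0])" if "z \<in> B" for z
      proof -
        have "length z \<le> length b" using b \<open>finite ?L\<close> that by simp
        from cmp[OF that b(1)] have "prefix z b"
        proof
          assume "prefix z b" then show ?thesis .
        next
          assume "prefix b z"
          then have "length b \<le> length z" by (rule prefix_length_le)
          then show "prefix z b" using \<open>prefix b z\<close> \<open>length z \<le> length b\<close> prefix_length_eq1 by fastforce
        qed
        moreover have "prefix b (b @ [0])" by simp
        ultimately show ?thesis by (rule prefix_order.trans)
      qed
      have "prefix x y \<or> prefix y x" using x y cmp pz by auto
      then show "x = y \<or> strict_prefix x y \<or> strict_prefix y x"
        by (auto simp: strict_prefix_def)
    qed
    then have "b @ [0] \<in> B" using mx by blast
    then have "length (b@[0]) \<in> ?L" by blast
    then have "length (b@[0]) \<le> Max ?L" using \<open>finite ?L\<close> by (intro Max_ge)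
    then show False using b by simp
  qed
  define s where "s k = (THE x. x \<in> B \<and> length x = k)" for k
  have sk: "s k \<in> B \<and> length (s k) = k" for k
  proof -
    obtain b where "b \<in> B" "k \<le> length b" using long by blast
    then have "take k b \<in> B" "length (take k b) = k" using down take_is_prefix by auto
    then have "\<exists>!x. x \<in> B \<and> length x = k" using uniq by blast
    then show ?thesis unfolding s_def by (rule theI')
  qed
  have "good s" unfolding good_def
  proof (intro conjI allI impI)
    fix k show "length (s k) = k" using sk by blast
  next
    fix k j :: nat assume "k \<le> j"
    have "take k (s j) \<in> B" using down sk take_is_prefix by blast
    moreover have "length (take k (s j)) = k" using sk \<open>k \<le> j\<close> by simp
    ultimately show "s k = take k (s j)" using uniq[of "s k" "take k (s j)"] sk by simp
  qed
  moreover have "B = range s"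
  proof
    show "B \<subseteq> range s"
    proof
      fix x assume "x \<in> B" then have "x = s (length x)" using uniq[OF \<open>x \<in> B\<close>, of "s (length x)"] sk by simp
      then show "x \<in> range s" by auto
    qed
  next
    show "range s \<subseteq> B" using sk by blast
  qed
  ultimately show ?thesis by blast
qed

lemma ls_son_sub: "locally_strict F \<Longrightarrow> F (x @ [m]) \<subseteq> F x"
  unfolding locally_strict_def sons_def by blast

lemma ls_mono: assumes "locally_strict F" "prefix x y" shows "F y \<subseteq> F x"
proof -
  obtain z where y: "y = x @ z" using assms(2) prefixE by blast
  have "F (x @ z) \<subseteq> F x"
  proof (induction z rule: rev_induct)
    case Nil then show ?case by simp
  next
    case (snoc a z)
    have "F (x @ z @ [a]) \<subseteq> F (x @ z)" using ls_son_sub[OF assms(1), of "x @ z" a] by simp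
    then show ?case using snoc by auto
  qed
  then show ?thesis using y by simp
qed

lemma ls_disj_len:
  assumes ls: "locally_strict F"
  shows "length x = length y \<Longrightarrow> x \<noteq> y \<Longrightarrow> F x \<inter> F y = {}"
proof (induction x arbitrary: y rule: rev_induct)
  case Nil then show ?case by simp
next
  case (snoc a x')
  obtain y' b where y: "y = y' @ [b]"
    using snoc.prems(1) by (cases y rule: rev_exhaust) auto
  have len: "length x' = length y'" using snoc.prems(1) y by simp
  show ?case
  proof (cases "x' = y'")
    case True
    then have "a \<noteq> b" using snoc.prems(2) y by simp
    have "disjoint_family_on F (sons x')" using ls unfolding locally_strict_def by blast
    then show ?thesis unfolding disjoint_family_on_def sons_def using True y \<open>a \<noteq> b\<close> by auto
  next
    case False
    then have "F x' \<inter> F y' = {}" using snoc.IH len by blast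
    moreover have "F (x' @ [a]) \<subseteq> F x'" "F y \<subseteq> F y'" using ls_son_sub[OF ls] y by auto
    ultimately show ?thesis by blast
  qed
qed

lemma ls_disj_take:
  assumes ls: "locally_strict F" and "length x \<le> length y" "take (length x) y \<noteq> x"
  shows "F x \<inter> F y = {}"
proof -
  have "F y \<subseteq> F (take (length x) y)" using ls_mono[OF ls] take_is_prefix by blast
  moreover have "F x \<inter> F (take (length x) y) = {}"
    using ls_disj_len[OF ls] assms by (metis length_take min_absorb2)
  ultimately show ?thesis by blast
qed

lemma ls_uniq:
  "locally_strict F \<Longrightarrow> p \<in> F v \<Longrightarrow> p \<in> F w \<Longrightarrow> length v = length w \<Longrightarrow> v = w"
  using ls_disj_len by blast

primrec pth :: "'a foliage \<Rightarrow> 'a \<Rightarrow> nat \<Rightarrow> nat list" where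
  "pth F p 0 = []"
| "pth F p (Suc k) = pth F p k @ [SOME m. p \<in> F (pth F p k @ [m])]"

definition dig :: "'a foliage \<Rightarrow> 'a \<Rightarrow> nat \<Rightarrow> nat" where
  "dig F p k = (SOME m. p \<in> F (pth F p k @ [m]))"

lemma pth_Suc': "pth F p (Suc k) = pth F p k @ [dig F p k]"
  by (simp add: dig_def)

lemma pth_len[simp]: "length (pth F p k) = k"
  by (induction k) auto

lemma pth_in:
  assumes ls: "locally_strict F" and p: "p \<in> F []"
  shows "p \<in> F (pth F p k)"
proof (induction k)
  case 0 then show ?case using p by simp
next
  case (Suc k)
  have "F (pth F p k) = (\<Union>s\<in>sons (pth F p k). F s)" using ls unfolding locally_strict_def by blast
  then have "\<exists>m. p \<in> F (pth F p k @ [m])" using Suc unfolding sons_def by auto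
  then show ?case unfolding pth.simps by (rule someI_ex)
qed

lemma pth_take: "k \<le> j \<Longrightarrow> take k (pth F p j) = pth F p k"
proof (induction j)
  case 0 then show ?case by simp
next
  case (Suc j)
  show ?case
  proof (cases "k = Suc j")
    case True then show ?thesis by simp
  next
    case False then have "k \<le> j" using Suc.prems by simp
    then show ?thesis using Suc.IH by simp
  qed
qed

lemma pth_good: "good (pth F p)"
  unfolding good_def using pth_take by (metis pth_len)

lemma pth_uniq:
  assumes "locally_strict F" "p \<in> F []" "p \<in> F v"
  shows "v = pth F p (length v)"
  using ls_uniq[OF assms(1) assms(3) pth_in[OF assms(1,2)]] by simp

lemma good_prefix: "good s \<Longrightarrow> k \<le> j \<Longrightarrow> prefix (s k) (s j)"
  unfolding good_def by (metis take_is_prefix)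

lemma sb_good:
  assumes "strict_branches F" "good s"
  shows "\<exists>q. (\<Inter>k. F (s k)) = {q}"
proof -
  have "tree_branch (range s)" using good_branch[OF assms(2)] .
  then obtain q where "(\<Inter>x\<in>range s. F x) = {q}" using assms(1) unfolding strict_branches_def by blast
  then show ?thesis by (auto simp: image_image)
qed

definition ext :: "nat list \<Rightarrow> nat \<Rightarrow> nat list" where
  "ext x k = take k (x @ replicate k 0)"

lemma ext_good: "good (ext x)"
  unfolding good_def ext_def
proof (intro conjI allI impI)
  fix k show "length (take k (x @ replicate k 0)) = k" by simp
next
  fix k j :: nat assume "k \<le> j"
  show "take k (x @ replicate k 0) = take k (take j (x @ replicate j 0))"
    using \<open>k \<le> j\<close> by (simp add: take_append min_def replicate_add[symmetric])
qed

lemma ext_len: "ext x (length x) = x"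
  unfolding ext_def by simp

lemma sb_nonempty:
  assumes "strict_branches F" shows "F x \<noteq> {}"
proof -
  obtain q where "(\<Inter>k. F (ext x k)) = {q}" using sb_good[OF assms ext_good] by blast
  then have "q \<in> F (ext x (length x))" by blast
  then show ?thesis using ext_len by auto
qed

declare pth.simps(2)[simp del] pth_Suc'[simp]

definition dd :: "nat \<Rightarrow> nat \<Rightarrow> nat" where
  "dd b m = (if m < b then m else Suc m)"

lemma dd_neq: "dd b m \<noteq> b" unfolding dd_def by auto
lemma dd_neq2: "b \<noteq> dd b m" unfolding dd_def by auto
lemma dd_inj: "dd b m1 = dd b m2 \<Longrightarrow> m1 = m2" unfolding dd_def by (auto split: if_splits)
lemma dd_surj: "c \<noteq> b \<Longrightarrow> dd b (if c < b then c else c - 1) = c" unfolding dd_def by auto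

definition rem :: "'a foliage \<Rightarrow> 'a \<Rightarrow> nat list \<Rightarrow> nat \<Rightarrow> nat list" where
  "rem F a u m = pth F a (length u + fst (prod_decode m)) @
     [dd (dig F a (length u + fst (prod_decode m))) (snd (prod_decode m))]"

lemma rem_len: "length (rem F a u m) = Suc (length u + fst (prod_decode m))"
  unfolding rem_def by simp

lemma in_root: "locally_strict F \<Longrightarrow> a \<in> F u \<Longrightarrow> a \<in> F []"
  using ls_mono[of F "[]" u] by auto

lemma rem_prefix:
  assumes ls: "locally_strict F" and a: "a \<in> F u"
  shows "prefix u (rem F a u m)"
proof -
  have r: "a \<in> F []" using in_root[OF ls a] .
  have "u = pth F a (length u)" using pth_uniq[OF ls r a] .
  also have "\<dots> = take (length u) (pth F a (length u + fst (prod_decode m)))"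
    using pth_take[of "length u" "length u + fst (prod_decode m)" F a] by simp
  finally have "prefix u (pth F a (length u + fst (prod_decode m)))"
    by (metis take_is_prefix)
  then show ?thesis unfolding rem_def by (metis prefix_order.trans prefixI)
qed

lemma rem_notin:
  assumes ls: "locally_strict F" and a: "a \<in> F u"
  shows "a \<notin> F (rem F a u m)"
proof -
  have r: "a \<in> F []" using in_root[OF ls a] .
  define n where "n = length u + fst (prod_decode m)"
  have "a \<in> F (pth F a (Suc n))" using pth_in[OF ls r] .
  then have "a \<in> F (pth F a n @ [dig F a n])" by (simp add: pth_Suc')
  moreover have "pth F a n @ [dig F a n] \<noteq> rem F a u m"
    unfolding rem_def n_def using dd_neq2 by simp
  moreover have "length (pth F a n @ [dig F a n]) = length (rem F a u m)"
    unfolding rem_def n_def by simp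
  ultimately show ?thesis using ls_disj_len[OF ls] by blast
qed

lemma rem_sub:
  assumes ls: "locally_strict F" and a: "a \<in> F u"
  shows "F (rem F a u m) \<subseteq> F u"
  using ls_mono[OF ls rem_prefix[OF ls a]] .

lemma rem_disj_le:
  assumes ls: "locally_strict F" and a: "a \<in> F u"
    and ne: "prod_decode m1 \<noteq> prod_decode m2"
    and le: "fst (prod_decode m1) \<le> fst (prod_decode m2)"
  shows "F (rem F a u m1) \<inter> F (rem F a u m2) = {}"
proof -
  obtain j1 k1 where d1: "prod_decode m1 = (j1, k1)" by (cases "prod_decode m1")
  obtain j2 k2 where d2: "prod_decode m2 = (j2, k2)" by (cases "prod_decode m2")
  let ?x = "rem F a u m1" and ?y = "rem F a u m2"
  have lx: "length ?x = Suc (length u + j1)" and ly: "length ?y = Suc (length u + j2)"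
    using rem_len[of F a u m1] rem_len[of F a u m2] d1 d2 by simp_all
  have j: "j1 \<le> j2" using le d1 d2 by simp
  have tk: "take (length ?x) ?y \<noteq> ?x"
  proof (cases "j1 = j2")
    case True
    then have "k1 \<noteq> k2" using ne d1 d2 by simp
    then have "dd (dig F a (length u + j1)) k1 \<noteq> dd (dig F a (length u + j1)) k2"
      using dd_inj by blast
    then show ?thesis using True lx ly d1 d2 unfolding rem_def by simp
  next
    case False
    then have lt: "Suc (length u + j1) \<le> length u + j2" using j by simp
    have "take (length ?x) ?y = take (Suc (length u + j1)) (pth F a (length u + j2))"
      using lx lt unfolding rem_def d2 by simp
    also have "\<dots> = pth F a (Suc (length u + j1))" by (rule pth_take[OF lt])
    also have "\<dots> = pth F a (length u + j1) @ [dig F a (length u + j1)]" by (simp add: pth_Suc')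
    finally have e1: "take (length ?x) ?y = pth F a (length u + j1) @ [dig F a (length u + j1)]" .
    have e2: "?x = pth F a (length u + j1) @ [dd (dig F a (length u + j1)) k1]"
      unfolding rem_def d1 by simp
    show ?thesis unfolding e1 using e2 dd_neq2 by (metis last_snoc)
  qed
  have "length ?x \<le> length ?y" using lx ly j by simp
  then show ?thesis using ls_disj_take[OF ls _ tk] by blast
qed

lemma rem_disj:
  assumes ls: "locally_strict F" and a: "a \<in> F u" and ne: "m1 \<noteq> m2"
  shows "F (rem F a u m1) \<inter> F (rem F a u m2) = {}"
proof -
  have "prod_decode m1 \<noteq> prod_decode m2"
  proof
    assume "prod_decode m1 = prod_decode m2"
    then have "prod_encode (prod_decode m1) = prod_encode (prod_decode m2)" by simp
    then show False using ne by simp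
  qed
  then have pd': "prod_decode m2 \<noteq> prod_decode m1" by simp
  show ?thesis
  proof (cases "fst (prod_decode m1) \<le> fst (prod_decode m2)")
    case True show ?thesis using rem_disj_le[OF ls a \<open>prod_decode m1 \<noteq> prod_decode m2\<close> True] .
  next
    case False then have "fst (prod_decode m2) \<le> fst (prod_decode m1)" by simp
    from rem_disj_le[OF ls a pd' this] show ?thesis by blast
  qed
qed

lemma rem_cover:
  assumes ls: "locally_strict F" and sb: "strict_branches F"
    and a: "a \<in> F u" and x: "x \<in> F u" and xa: "x \<noteq> a"
  shows "\<exists>m. x \<in> F (rem F a u m)"
proof -
  have ra: "a \<in> F []" using in_root[OF ls a] .
  have rx: "x \<in> F []" using in_root[OF ls x] .
  have Pu: "pth F a (length u) = u" using pth_uniq[OF ls ra a] by simp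
  have Qu: "pth F x (length u) = u" using pth_uniq[OF ls rx x] by simp
  have ex: "\<exists>n. pth F x n \<noteq> pth F a n"
  proof (rule ccontr)
    assume "\<not> ?thesis"
    then have eq: "\<And>n. pth F x n = pth F a n" by blast
    obtain q where q: "(\<Inter>k. F (pth F a k)) = {q}" using sb_good[OF sb pth_good[of F a]] by blast
    have "a \<in> F (pth F a k)" for k using pth_in[OF ls ra] .
    then have "a \<in> (\<Inter>k. F (pth F a k))" by blast
    moreover have "x \<in> F (pth F a k)" for k using pth_in[OF ls rx, of k] eq[of k] by simp
    then have "x \<in> (\<Inter>k. F (pth F a k))" by blast
    ultimately show False using q xa by blast
  qed
  define n where "n = (LEAST n. pth F x n \<noteq> pth F a n)"
  have n1: "pth F x n \<noteq> pth F a n" using LeastI_ex[OF ex] unfolding n_def .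
  have n2: "pth F x k = pth F a k" if "k < n" for k
    using not_less_Least[OF that[unfolded n_def]] by simp
  have "\<not> n \<le> length u"
  proof
    assume "n \<le> length u"
    then have "pth F x n = take n (pth F x (length u))" "pth F a n = take n (pth F a (length u))"
      using pth_take[of n "length u" F x] pth_take[of n "length u" F a] by simp_all
    then show False using n1 Pu Qu by simp
  qed
  then obtain n' where n': "n = Suc n'" "length u \<le> n'" by (cases n) auto
  have eqn': "pth F x n' = pth F a n'" using n2 n' by simp
  have dne: "dig F x n' \<noteq> dig F a n'" using n1 eqn' unfolding n' by simp
  define j where "j = n' - length u"
  define c where "c = dig F x n'"
  define b where "b = dig F a n'"
  have jn: "length u + j = n'" using n' j_def by simp
  define m where "m = prod_encode (j, if c < b then c else c - 1)"
  have pm: "prod_decode m = (j, if c < b then c else c - 1)" unfolding m_def by simp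
  have "rem F a u m = pth F a n' @ [dd b (if c < b then c else c - 1)]"
    unfolding rem_def pm b_def using jn by simp
  also have "\<dots> = pth F x n' @ [c]" using dd_surj[of c b] dne c_def b_def eqn' by simp
  also have "\<dots> = pth F x n" using n' c_def by simp
  finally have "x \<in> F (rem F a u m)" using pth_in[OF ls rx, of n] by simp
  then show ?thesis by blast
qed

definition cnd :: "'a foliage \<Rightarrow> 'a set \<Rightarrow> nat \<Rightarrow> nat list \<Rightarrow> bool" where
  "cnd F A l u \<longleftrightarrow> even l \<and> from_nat_into A (l div 2) \<in> A \<and> from_nat_into A (l div 2) \<in> F u"

definition stp :: "'a foliage \<Rightarrow> 'a set \<Rightarrow> nat \<Rightarrow> nat list \<Rightarrow> nat \<Rightarrow> nat list" where
  "stp F A l u m = (if cnd F A l u then rem F (from_nat_into A (l div 2)) u m else u @ [m])"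

lemma st_prefix:
  assumes ls: "locally_strict F"
  shows "prefix u (stp F A l u m) \<and> length u < length (stp F A l u m)"
proof (cases "cnd F A l u")
  case True
  then have a: "from_nat_into A (l div 2) \<in> F u" unfolding cnd_def by blast
  show ?thesis unfolding stp_def using True rem_prefix[OF ls a] by (simp add: rem_len)
next
  case False then show ?thesis unfolding stp_def by simp
qed

lemma st_sub: "locally_strict F \<Longrightarrow> F (stp F A l u m) \<subseteq> F u"
  using ls_mono st_prefix by blast

lemma st_notin:
  assumes ls: "locally_strict F" and c: "cnd F A l u"
  shows "from_nat_into A (l div 2) \<notin> F (stp F A l u m)"
proof -
  have a: "from_nat_into A (l div 2) \<in> F u" using c unfolding cnd_def by blast
  show ?thesis unfolding stp_def using c rem_notin[OF ls a] by simp
qed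

lemma st_disj:
  assumes ls: "locally_strict F" and ne: "m1 \<noteq> m2"
  shows "F (stp F A l u m1) \<inter> F (stp F A l u m2) = {}"
proof (cases "cnd F A l u")
  case True
  then have a: "from_nat_into A (l div 2) \<in> F u" unfolding cnd_def by blast
  show ?thesis unfolding stp_def using True rem_disj[OF ls a ne] by simp
next
  case False
  have "F (u @ [m1]) \<inter> F (u @ [m2]) = {}" using ls_disj_len[OF ls] ne by simp
  then show ?thesis unfolding stp_def using False by simp
qed

lemma st_cover:
  assumes ls: "locally_strict F" and sb: "strict_branches F"
  shows "F u - A = (\<Union>m. F (stp F A l u m) - A)"
proof
  show "(\<Union>m. F (stp F A l u m) - A) \<subseteq> F u - A" using st_sub[OF ls] by blast
next
  show "F u - A \<subseteq> (\<Union>m. F (stp F A l u m) - A)"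
  proof
    fix x assume x: "x \<in> F u - A"
    have "\<exists>m. x \<in> F (stp F A l u m)"
    proof (cases "cnd F A l u")
      case True
      then have a: "from_nat_into A (l div 2) \<in> F u" "from_nat_into A (l div 2) \<in> A"
        unfolding cnd_def by blast+
      then have "x \<noteq> from_nat_into A (l div 2)" using x by blast
      then obtain m where "x \<in> F (rem F (from_nat_into A (l div 2)) u m)"
        using rem_cover[OF ls sb a(1)] x by blast
      then show ?thesis unfolding stp_def using True by auto
    next
      case False
      have "F u = (\<Union>s\<in>sons u. F s)" using ls unfolding locally_strict_def by blast
      then obtain m where "x \<in> F (u @ [m])" using x unfolding sons_def by auto
      then show ?thesis unfolding stp_def using False by auto
    qed
    then show "x \<in> (\<Union>m. F (stp F A l u m) - A)" using x by blast
  qed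
qed

primrec gr :: "'a foliage \<Rightarrow> 'a set \<Rightarrow> nat list \<Rightarrow> nat list" where
  "gr F A [] = []"
| "gr F A (m # rw) = stp F A (length rw) (gr F A rw) m"

definition gn :: "'a foliage \<Rightarrow> 'a set \<Rightarrow> nat list \<Rightarrow> nat list" where
  "gn F A w = gr F A (rev w)"

lemma gn_Nil[simp]: "gn F A [] = []" unfolding gn_def by simp

lemma gn_snoc[simp]: "gn F A (w @ [m]) = stp F A (length w) (gn F A w) m"
  unfolding gn_def by simp

lemma gn_prefix:
  assumes ls: "locally_strict F" and "prefix w w'"
  shows "prefix (gn F A w) (gn F A w')"
proof -
  obtain z where w': "w' = w @ z" using assms(2) prefixE by blast
  have "prefix (gn F A w) (gn F A (w @ z))"
  proof (induction z rule: rev_induct)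
    case Nil then show ?case by simp
  next
    case (snoc a z)
    have "prefix (gn F A (w @ z)) (gn F A (w @ z @ [a]))"
      using st_prefix[OF ls] by (metis append_assoc gn_snoc)
    then show ?case using snoc prefix_order.trans by (metis append_assoc)
  qed
  then show ?thesis using w' by simp
qed

lemma gn_len_lt:
  assumes ls: "locally_strict F" shows "length (gn F A w) < length (gn F A (w @ [m]))"
proof -
  have "length (gn F A w) < length (stp F A (length w) (gn F A w) m)" using st_prefix[OF ls] by blast
  then show ?thesis by simp
qed

lemma gn_len: "locally_strict F \<Longrightarrow> length w \<le> length (gn F A w)"
proof (induction w rule: rev_induct)
  case Nil then show ?case by simp
next
  case (snoc a w) then show ?case using gn_len_lt[OF snoc.prems, of A w a] by simp
qed

definition hh :: "'a foliage \<Rightarrow> 'a set \<Rightarrow> 'a foliage" where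
  "hh F A w = F (gn F A w) - A"

lemma hh_snoc: "hh F A (w @ [m]) = F (stp F A (length w) (gn F A w) m) - A"
  unfolding hh_def by simp

lemma hh_ls:
  assumes ls: "locally_strict F" and sb: "strict_branches F"
  shows "locally_strict (hh F A)"
  unfolding locally_strict_def
proof (intro allI conjI)
  fix x
  have "hh F A x = (\<Union>m. F (stp F A (length x) (gn F A x) m) - A)"
    unfolding hh_def by (rule st_cover[OF ls sb])
  also have "\<dots> = (\<Union>m. hh F A (x @ [m]))" by (simp add: hh_snoc)
  also have "\<dots> = (\<Union>s\<in>sons x. hh F A s)" unfolding sons_def by (simp add: image_image)
  finally show "hh F A x = (\<Union>s\<in>sons x. hh F A s)" .
  show "disjoint_family_on (hh F A) (sons x)"
    unfolding disjoint_family_on_def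
  proof (intro ballI impI)
    fix s1 s2 assume "s1 \<in> sons x" "s2 \<in> sons x" "s1 \<noteq> s2"
    then obtain m1 m2 where s: "s1 = x @ [m1]" "s2 = x @ [m2]" "m1 \<noteq> m2"
      unfolding sons_def by auto
    show "hh F A s1 \<inter> hh F A s2 = {}"
      unfolding s hh_snoc using st_disj[OF ls s(3)] by blast
  qed
qed

lemma hh_open:
  assumes "open_foliage X F"
  shows "open_foliage (subtopology X (topspace X - A)) (hh F A)"
  unfolding open_foliage_def
proof
  fix w
  have o: "openin X (F (gn F A w))" using assms unfolding open_foliage_def by blast
  then have "F (gn F A w) \<subseteq> topspace X" by (rule openin_subset)
  then have "hh F A w = F (gn F A w) \<inter> (topspace X - A)" unfolding hh_def by blast
  then show "openin (subtopology X (topspace X - A)) (hh F A w)"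
    using o openin_subtopology by blast
qed

lemma hh_sb:
  assumes ls: "locally_strict F" and sb: "strict_branches F" and cA: "countable A"
  shows "strict_branches (hh F A)"
  unfolding strict_branches_def
proof (intro allI impI)
  fix B assume "tree_branch B"
  then obtain t where t: "good t" "B = range t" using branch_good by blast
  define G where "G k = gn F A (t k)" for k
  have tlen: "length (t k) = k" for k using t(1) unfolding good_def by blast
  have Gpre: "prefix (G k) (G j)" if "k \<le> j" for k j
    unfolding G_def using gn_prefix[OF ls good_prefix[OF t(1) that]] .
  have Glen: "k \<le> length (G k)" for k
    unfolding G_def using gn_len[OF ls, of "t k" A] tlen by simp
  define s where "s k = take k (G k)" for k
  have tkG: "take k (G j) = s k" if kj: "k \<le> j" for k j
  proof -
    obtain z where "G j = G k @ z" using Gpre[OF kj] prefixE by blast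
    then show ?thesis unfolding s_def using Glen[of k] by simp
  qed
  have "good s" unfolding good_def
  proof (intro conjI allI impI)
    fix k show "length (s k) = k" unfolding s_def using Glen[of k] by simp
  next
    fix k j :: nat assume kj: "k \<le> j"
    have "take k (s j) = take k (G j)" unfolding s_def using kj by simp
    then show "s k = take k (s j)" using tkG[OF kj] by simp
  qed
  then obtain q where q: "(\<Inter>k. F (s k)) = {q}" using sb_good[OF sb] by blast
  have GinF: "q \<in> F (G k)" for k
  proof -
    let ?N = "length (G k)"
    have "s ?N = take ?N (G ?N)" unfolding s_def ..
    also have "\<dots> = G k"
    proof -
      obtain z where "G ?N = G k @ z" using Gpre[OF Glen[of k]] prefixE by blast
      then show ?thesis by simp
    qed
    finally have "s ?N = G k" .
    moreover have "q \<in> F (s ?N)" using q by blast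
    ultimately show ?thesis by simp
  qed
  have Gsub: "F (G k) \<subseteq> F (s k)" for k
    unfolding s_def using ls_mono[OF ls take_is_prefix] .
  have IG: "(\<Inter>k. F (G k)) = {q}"
  proof
    show "(\<Inter>k. F (G k)) \<subseteq> {q}"
    proof
      fix y assume "y \<in> (\<Inter>k. F (G k))"
      then have "y \<in> F (s k)" for k using Gsub by blast
      then have "y \<in> (\<Inter>k. F (s k))" by blast
      then show "y \<in> {q}" using q by simp
    qed
    show "{q} \<subseteq> (\<Inter>k. F (G k))" using GinF by blast
  qed
  have qA: "q \<notin> A"
  proof
    assume "q \<in> A"
    then obtain n where n: "from_nat_into A n = q" using from_nat_into_surj[OF cA] by blast
    define l where "l = 2 * n"
    have c: "cnd F A l (G l)" unfolding cnd_def l_def using n \<open>q \<in> A\<close> GinF by simp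
    have tl: "t l = take l (t (Suc l))" using t(1) unfolding good_def by simp
    have "t (Suc l) = take (Suc l) (t (Suc l))" using tlen[of "Suc l"] by simp
    also have "\<dots> = take l (t (Suc l)) @ [t (Suc l) ! l]"
      using take_Suc_conv_app_nth[of l "t (Suc l)"] tlen[of "Suc l"] by simp
    finally have ts: "t (Suc l) = t l @ [t (Suc l) ! l]" using tl by simp
    have "G (Suc l) = gn F A (t l @ [t (Suc l) ! l])" unfolding G_def using ts by simp
    also have "\<dots> = stp F A l (G l) (t (Suc l) ! l)" unfolding gn_snoc G_def tlen ..
    finally have "G (Suc l) = stp F A l (G l) (t (Suc l) ! l)" .
    then have "q \<notin> F (G (Suc l))" using st_notin[OF ls c] n l_def by simp
    then show False using GinF by blast
  qed
  have "(\<Inter>x\<in>B. hh F A x) = (\<Inter>k. hh F A (t k))"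
    unfolding t(2) by (simp add: image_image)
  also have "\<dots> = {q}"
  proof (intro equalityI subsetI)
    fix y assume "y \<in> (\<Inter>k. hh F A (t k))"
    then have "y \<in> F (G k)" for k unfolding hh_def G_def by blast
    then have "y \<in> (\<Inter>k. F (G k))" by blast
    then show "y \<in> {q}" using IG by simp
  next
    fix y assume "y \<in> {q}"
    then have "y = q" by simp
    have "q \<in> hh F A (t k)" for k unfolding hh_def using GinF[of k] qA G_def by simp
    then show "y \<in> (\<Inter>k. hh F A (t k))" using \<open>y = q\<close> by blast
  qed
  finally show "\<exists>p. (\<Inter>x\<in>B. hh F A x) = {p}" by blast
qed

theorem proposition15:
  fixes X :: "'a topology" and F :: "'a foliage" and A :: "'a set"
  assumes "baire_foliage_tree X F"
    and "A \<subseteq> topspace X" and "countable A"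
  shows "\<exists>H. baire_foliage_tree (subtopology X (topspace X - A)) H \<and>
    (\<forall>p\<in>topspace X - A. \<exists>f::nat \<Rightarrow> nat. strict_mono f \<and>
       (\<forall>U. nbhd X p U \<longrightarrow>
          {2*n+1 | n. f n \<in> rise F p U} \<subseteq> rise H p (U - A)))"
proof -
  have oF: "open_foliage X F" and ls: "locally_strict F" and sb: "strict_branches F"
    and F0: "F [] = topspace X"
    using assms(1) unfolding baire_foliage_tree_def by auto
  define H where "H = hh F A"
  have lsH: "locally_strict H" unfolding H_def using hh_ls[OF ls sb] .
  have sbH: "strict_branches H" unfolding H_def using hh_sb[OF ls sb assms(3)] .
  have oH: "open_foliage (subtopology X (topspace X - A)) H" unfolding H_def using hh_open[OF oF] .
  have H0: "H [] = topspace (subtopology X (topspace X - A))"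
    unfolding H_def hh_def using F0 by auto
  have bH: "baire_foliage_tree (subtopology X (topspace X - A)) H"
    unfolding baire_foliage_tree_def using lsH sbH oH H0 by blast
  have hsnoc: "H (w @ [m]) = F (stp F A (length w) (gn F A w) m) - A" for w m
    unfolding H_def by (rule hh_snoc)
  have main: "\<exists>f::nat \<Rightarrow> nat. strict_mono f \<and>
       (\<forall>U. nbhd X p U \<longrightarrow> {2*n+1 | n. f n \<in> rise F p U} \<subseteq> rise H p (U - A))"
    if p: "p \<in> topspace X - A" for p
  proof -
    have pH0: "p \<in> H []" using H0 p by simp
    define W where "W = pth H p"
    have pW: "p \<in> H (W k)" for k unfolding W_def using pth_in[OF lsH pH0] .
    define f where "f n = length (gn F A (W (2*n+1)))" for n
    have inc: "length (gn F A (W k)) < length (gn F A (W (Suc k)))" for k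
      unfolding W_def pth_Suc' by (rule gn_len_lt[OF ls])
    have "f n < f (Suc n)" for n
    proof -
      have "f n < length (gn F A (W (Suc (2*n+1))))" unfolding f_def using inc .
      also have "\<dots> < length (gn F A (W (Suc (Suc (2*n+1)))))" using inc .
      also have "\<dots> = f (Suc n)" unfolding f_def by simp
      finally show ?thesis .
    qed
    then have sm: "strict_mono f" using strict_mono_Suc_iff by blast
    have "{2*n+1 | n. f n \<in> rise F p U} \<subseteq> rise H p (U - A)" if nb: "nbhd X p U" for U
    proof
      fix z assume "z \<in> {2*n+1 | n. f n \<in> rise F p U}"
      then obtain n where z: "z = 2*n+1" and fr: "f n \<in> rise F p U" by blast
      then obtain v where v: "f n = length v" "v \<in> scope F p" "gg (shoot F v) {U}"
        unfolding rise_def by blast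
      define w where "w = W (2*n+1)"
      define u where "u = gn F A w"
      have lw: "length w = 2*n+1" unfolding w_def W_def by simp
      have pu: "p \<in> F u" using pW[of "2*n+1"] unfolding u_def w_def H_def hh_def by simp
      have "v = u" using ls_uniq[OF ls _ pu] v unfolding scope_def f_def u_def w_def by simp
      have pU: "p \<in> U" using nb unfolding nbhd_def by blast
      obtain G where G: "G \<in> shoot F u" "G \<noteq> {}" "G \<subseteq> U"
        using v(3) pU \<open>v = u\<close> unfolding gg_def by blast
      then obtain C where C: "G = (\<Union>x\<in>C. F x)" "C \<subseteq> sons u" "finite (sons u - C)"
        unfolding shoot_def by blast
      have nc: "\<not> cnd F A (length w) u" using lw unfolding cnd_def by simp
      have hs: "H (w @ [m]) = F (u @ [m]) - A" for m
        using hsnoc[of w m] nc unfolding stp_def u_def by simp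
      define M where "M = {m. u @ [m] \<in> C}"
      have CM: "C = (\<lambda>m. u @ [m]) ` M" using C(2) unfolding M_def sons_def by auto
      have "sons u - C = (\<lambda>m. u @ [m]) ` (UNIV - M)" unfolding CM sons_def by auto
      then have "finite ((\<lambda>m. u @ [m]) ` (UNIV - M))" using C(3) by simp
      moreover have "inj (\<lambda>m::nat. u @ [m])" by (simp add: inj_def)
      ultimately have fM: "finite (UNIV - M)" using finite_imageD inj_on_subset by blast
      define C' where "C' = (\<lambda>m. w @ [m]) ` M"
      have C'1: "C' \<subseteq> sons w" unfolding C'_def sons_def by auto
      have "sons w - C' = (\<lambda>m. w @ [m]) ` (UNIV - M)" unfolding C'_def sons_def by auto
      then have C'2: "finite (sons w - C')" using fM by simp
      define G' where "G' = (\<Union>x\<in>C'. H x)"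
      have G'eq: "G' = G - A" unfolding G'_def C'_def C(1) CM using hs by auto
      have "M \<noteq> {}"
      proof
        assume "M = {}" then have "finite (UNIV :: nat set)" using fM by simp
        then show False by simp
      qed
      then obtain m0 where "m0 \<in> M" by blast
      then have "w @ [m0] \<in> C'" unfolding C'_def by blast
      moreover have "H (w @ [m0]) \<noteq> {}" using sb_nonempty[OF sbH] .
      ultimately have "G' \<noteq> {}" unfolding G'_def by blast
      moreover have "G' \<in> shoot H w" unfolding shoot_def G'_def using C'1 C'2 by blast
      moreover have "G' \<subseteq> U - A" using G'eq G(3) by blast
      ultimately have "gg (shoot H w) {U - A}" unfolding gg_def by blast
      moreover have "w \<in> scope H p" unfolding scope_def w_def using pW by blast
      ultimately show "z \<in> rise H p (U - A)" unfolding rise_def using z lw by (metis (mono_tags, lifting) mem_Collect_eq)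
    qed
    then show ?thesis using sm by blast
  qed
  show ?thesis using bH main by blast
qed

end
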